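(* There exists a proper temporal graph $\mathcal G$ whose reachability graph is not isomorphic to the non-strict-journey reachability graph of any simple temporal graph $\mathcal H$. (For instance, $\mathcal G$ the path $a-b-c-d$ with $\lambda(ab)=\{2\}$, $\lambda(bc)=\{1,3\}$, $\lambda(cd)=\{2\}$, whose reachability graph has arcs in both directions between every pair of vertices except $a$ and $d$.)
   Context: A temporal graph is a triple $\mathcal G=(V,E,\lambda)$ where $V$ is a finite vertex set, $E$ is a set of undirected edges on $V$, and $\lambda:E\to 2^{\mathbb N}\setminus\{\emptyset\}$ assigns to each edge a nonempty set of presence times. The footprint of $\mathcal G$ is the static graph $(V,E)$. A contact is a pair $(e,t)$ with $e\in E$ and $t\in\lambda(e)$. A journey from $u$ to $v$ is a sequence of contacts $(e_1,t_1),\dots,(e_k,t_k)$, $k\ge 1$, such that $e_1,\dots,e_k$ form a path from $u$ to $v$ in the footprint and $t_1\le t_2\le\dots\le t_k$ (a non-strict journey); it is strict if $t_1<t_2<\dots<t_k$. $\mathcal G$ is proper if $\lambda(e)\cap\lambda(e')=\emptyset$ for any two distinct edges $e,e'$ sharing an endpoint (in a proper graph every journey is strict); simple if $|\lambda(e)|=1$ for every edge $e$. The reachability graph $\mathcal C(\mathcal G)$ (with respect to a chosen journey notion) is the directed graph on $V$ having an arc $(u,v)$, $u\neq v$, if and only if there is a journey from $u$ to $v$. Reachability graphs are compared up to isomorphism of directed graphs. *)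

theory Defs
  imports Main
begin

record 'a tgraph =
  tverts :: "'a set"
  tedges :: "'a set set"
  tlab   :: "'a set \<Rightarrow> nat set"

definition temporal_graph :: "'a tgraph \<Rightarrow> bool" where
  "temporal_graph G \<longleftrightarrow> finite (tverts G) \<and>
     (\<forall>e\<in>tedges G. e \<subseteq> tverts G \<and> card e = 2 \<and> tlab G e \<noteq> {})"

definition proper_tg :: "'a tgraph \<Rightarrow> bool" where
  "proper_tg G \<longleftrightarrow> (\<forall>e\<in>tedges G. \<forall>e'\<in>tedges G.
      e \<noteq> e' \<and> e \<inter> e' \<noteq> {} \<longrightarrow> tlab G e \<inter> tlab G e' = {})"

definition simple_tg :: "'a tgraph \<Rightarrow> bool" where
  "simple_tg G \<longleftrightarrow> (\<forall>e\<in>tedges G. card (tlab G e) = 1)"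

definition journey :: "bool \<Rightarrow> 'a tgraph \<Rightarrow> 'a \<Rightarrow> 'a \<Rightarrow> 'a list \<Rightarrow> nat list \<Rightarrow> bool" where
  "journey strict G u v vs ts \<longleftrightarrow>
     length vs \<ge> 2 \<and> length ts = length vs - 1 \<and> distinct vs \<and>
     hd vs = u \<and> last vs = v \<and>
     (\<forall>i < length ts. {vs ! i, vs ! Suc i} \<in> tedges G \<and> ts ! i \<in> tlab G {vs ! i, vs ! Suc i}) \<and>
     (\<forall>i. Suc i < length ts \<longrightarrow>
        (if strict then ts ! i < ts ! Suc i else ts ! i \<le> ts ! Suc i))"

definition has_journey :: "bool \<Rightarrow> 'a tgraph \<Rightarrow> 'a \<Rightarrow> 'a \<Rightarrow> bool" where
  "has_journey strict G u v \<longleftrightarrow> (\<exists>vs ts. journey strict G u v vs ts)"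

definition reach_arcs :: "bool \<Rightarrow> 'a tgraph \<Rightarrow> ('a \<times> 'a) set" where
  "reach_arcs strict G = {(u, v). u \<in> tverts G \<and> v \<in> tverts G \<and> u \<noteq> v \<and> has_journey strict G u v}"

definition digraph_iso :: "'a set \<Rightarrow> ('a \<times> 'a) set \<Rightarrow> 'b set \<Rightarrow> ('b \<times> 'b) set \<Rightarrow> bool" where
  "digraph_iso V1 A1 V2 A2 \<longleftrightarrow> (\<exists>f. bij_betw f V1 V2 \<and>
     (\<forall>u\<in>V1. \<forall>v\<in>V1. (u, v) \<in> A1 \<longleftrightarrow> (f u, f v) \<in> A2))"

end

theory Submission
  imports Defs
begin

lemma journey_step:
  assumes J: "journey s G u v vs ts"
  shows "\<exists>w t vs' ts'. vs = u#vs' \<and> ts = t#ts' \<and> vs' \<noteq> [] \<and> hd vs' = w \<and>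
     {u,w} \<in> tedges G \<and> t \<in> tlab G {u,w} \<and> u \<notin> set vs' \<and>
     ((ts' = [] \<and> w = v) \<or> (journey s G w v vs' ts' \<and> (if s then t < hd ts' else t \<le> hd ts')))"
proof -
  from J have L: "length vs \<ge> 2" "length ts = length vs - 1" "distinct vs" "hd vs = u" "last vs = v"
    and E: "\<forall>i < length ts. {vs ! i, vs ! Suc i} \<in> tedges G \<and> ts ! i \<in> tlab G {vs ! i, vs ! Suc i}"
    and O: "\<forall>i. Suc i < length ts \<longrightarrow> (if s then ts ! i < ts ! Suc i else ts ! i \<le> ts ! Suc i)"
    by (auto simp: journey_def)
  obtain vs' where vs: "vs = u#vs'" using L by (cases vs) auto
  obtain t ts' where ts: "ts = t#ts'" using L vs by (cases ts) auto
  have ne: "vs' \<noteq> []" using L vs by auto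
  have e0: "{u, hd vs'} \<in> tedges G" "t \<in> tlab G {u, hd vs'}"
    using E[rule_format, of 0] vs ts ne by (auto simp: hd_conv_nth)
  have nu: "u \<notin> set vs'" using L vs by auto
  have len: "length vs' = Suc (length ts')" using L vs ts by auto
  show ?thesis
  proof (cases "ts' = []")
    case True
    then have "vs' = [hd vs']" using len by (cases vs') auto
    then have "hd vs' = v" using L vs ne by (metis last.simps last_ConsR)
    then show ?thesis using vs ts ne e0 nu True by blast
  next
    case False
    have "journey s G (hd vs') v vs' ts'"
      unfolding journey_def
    proof (intro conjI allI impI)
      show "2 \<le> length vs'" using len False by (cases ts') auto
      show "length ts' = length vs' - 1" using len by simp
      show "distinct vs'" using L vs by simp
      show "hd vs' = hd vs'" by simp
      show "last vs' = v" using L vs ne by simp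
    next
      fix i assume "i < length ts'"
      then show "{vs' ! i, vs' ! Suc i} \<in> tedges G"
        using E[rule_format, of "Suc i"] vs ts by auto
    next
      fix i assume "i < length ts'"
      then show "ts' ! i \<in> tlab G {vs' ! i, vs' ! Suc i}"
        using E[rule_format, of "Suc i"] vs ts by auto
    next
      fix i assume "Suc i < length ts'"
      then show "if s then ts' ! i < ts' ! Suc i else ts' ! i \<le> ts' ! Suc i"
        using O[rule_format, of "Suc i"] ts by auto
    qed
    moreover have "if s then t < hd ts' else t \<le> hd ts'"
      using O[rule_format, of 0] ts False by (cases ts') auto
    ultimately show ?thesis using vs ts ne e0 nu by blast
  qed
qed

lemma journey_one:
  assumes "{u,v} \<in> tedges G" "t \<in> tlab G {u,v}" "u \<noteq> v"
  shows "journey s G u v [u,v] [t]"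
  using assms by (auto simp: journey_def)

lemma journey_cons:
  assumes J: "journey s G w v vs ts" and e: "{u,w} \<in> tedges G" "t \<in> tlab G {u,w}"
    and nu: "u \<notin> set vs" and o: "if s then t < hd ts else t \<le> hd ts"
  shows "journey s G u v (u#vs) (t#ts)"
proof -
  from J have L: "length vs \<ge> 2" "length ts = length vs - 1" "distinct vs" "hd vs = w" "last vs = v"
    and E: "\<forall>i < length ts. {vs ! i, vs ! Suc i} \<in> tedges G \<and> ts ! i \<in> tlab G {vs ! i, vs ! Suc i}"
    and O: "\<forall>i. Suc i < length ts \<longrightarrow> (if s then ts ! i < ts ! Suc i else ts ! i \<le> ts ! Suc i)"
    by (auto simp: journey_def)
  have ne: "vs \<noteq> []" "ts \<noteq> []" using L by auto
  show ?thesis unfolding journey_def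
  proof (intro conjI allI impI)
    show "2 \<le> length (u # vs)" using L by simp
    show "length (t # ts) = length (u # vs) - 1" using L by simp
    show "distinct (u # vs)" using L nu by simp
    show "hd (u # vs) = u" by simp
    show "last (u # vs) = v" using L ne by simp
  next
    fix i assume i: "i < length (t # ts)"
    show "{(u # vs) ! i, (u # vs) ! Suc i} \<in> tedges G"
    proof (cases i)
      case 0 then show ?thesis using e L ne by (simp add: hd_conv_nth)
    next
      case (Suc j) then show ?thesis using E i by auto
    qed
  next
    fix i assume i: "i < length (t # ts)"
    show "(t # ts) ! i \<in> tlab G {(u # vs) ! i, (u # vs) ! Suc i}"
    proof (cases i)
      case 0 then show ?thesis using e L ne by (simp add: hd_conv_nth)
    next
      case (Suc j) then show ?thesis using E i by auto
    qed
  next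
    fix i assume i: "Suc i < length (t # ts)"
    show "if s then (t # ts) ! i < (t # ts) ! Suc i else (t # ts) ! i \<le> (t # ts) ! Suc i"
    proof (cases i)
      case 0 then show ?thesis using o ne by (simp add: hd_conv_nth[symmetric])
    next
      case (Suc j) then show ?thesis using O i by auto
    qed
  qed
qed

definition lbl :: "'a tgraph \<Rightarrow> 'a \<Rightarrow> 'a \<Rightarrow> nat" where
  "lbl H a b = the_elem (tlab H {a,b})"

lemma lbl_sym: "lbl H a b = lbl H b a"
  by (simp add: lbl_def insert_commute)

lemma edge_facts:
  assumes tg: "temporal_graph H" and sm: "simple_tg H" and e: "{a,b} \<in> tedges H"
  shows "a \<in> tverts H" "b \<in> tverts H" "a \<noteq> b" "tlab H {a,b} = {lbl H a b}"
proof -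
  from tg e have "{a,b} \<subseteq> tverts H" "card {a,b} = 2" by (auto simp: temporal_graph_def)
  then show "a \<in> tverts H" "b \<in> tverts H" "a \<noteq> b" by auto
  from sm e have "card (tlab H {a,b}) = 1" by (auto simp: simple_tg_def)
  then obtain c where "tlab H {a,b} = {c}" using card_1_singletonE by blast
  then show "tlab H {a,b} = {lbl H a b}" by (simp add: lbl_def)
qed

lemma edge_hj:
  assumes tg: "temporal_graph H" and sm: "simple_tg H" and e: "{a,b} \<in> tedges H"
  shows "has_journey False H a b"
  using journey_one[OF e, of "lbl H a b"] edge_facts[OF tg sm e] unfolding has_journey_def by auto

lemma two_hj:
  assumes tg: "temporal_graph H" and sm: "simple_tg H" and e1: "{a,b} \<in> tedges H"
    and e2: "{b,c} \<in> tedges H" and ne: "a \<noteq> c" and le: "lbl H a b \<le> lbl H b c"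
  shows "has_journey False H a c"
proof -
  have j: "journey False H b c [b,c] [lbl H b c]"
    using journey_one[OF e2, of "lbl H b c"] edge_facts[OF tg sm e2] by auto
  have "journey False H a c (a#[b,c]) (lbl H a b # [lbl H b c])"
    by (rule journey_cons[OF j e1]) (use edge_facts[OF tg sm e1] ne le in auto)
  then show ?thesis unfolding has_journey_def by blast
qed

lemma common_hj:
  assumes tg: "temporal_graph H" and sm: "simple_tg H" and e1: "{a,b} \<in> tedges H"
    and e2: "{b,c} \<in> tedges H" and ne: "a \<noteq> c"
  shows "has_journey False H a c \<or> has_journey False H c a"
proof (cases "lbl H a b \<le> lbl H b c")
  case True then show ?thesis using two_hj[OF tg sm e1 e2 ne] by blast
next
  case False
  have e1': "{b,a} \<in> tedges H" and e2': "{c,b} \<in> tedges H" using e1 e2 by (auto simp: insert_commute)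
  have "lbl H c b \<le> lbl H b a" using False by (simp add: lbl_sym)
  then show ?thesis using two_hj[OF tg sm e2' e1'] ne by blast
qed


lemma half:
  assumes tg: "temporal_graph H" and sm: "simple_tg H"
    and V: "tverts H = {x,y,p,q}" and dist: "distinct [x,y,p,q]"
    and nxy: "{x,y} \<notin> tedges H" and exp: "{x,p} \<in> tedges H"
    and nxq: "{x,q} \<notin> tedges H" and nyp: "{y,p} \<notin> tedges H"
    and hxq: "has_journey False H x q" and hqx: "has_journey False H q x"
  shows "{p,q} \<in> tedges H \<and> lbl H x p = lbl H p q"
proof -
  note ef = edge_facts[OF tg sm]
  have A: "{p,q} \<in> tedges H \<and> lbl H x p \<le> lbl H p q"
  proof -
    from hxq obtain vs ts where J: "journey False H x q vs ts" unfolding has_journey_def by blast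
    obtain w t vs' ts' where S: "vs = x#vs'" "ts = t#ts'" "vs' \<noteq> []" "hd vs' = w"
      "{x,w} \<in> tedges H" "t \<in> tlab H {x,w}" "x \<notin> set vs'"
      "(ts' = [] \<and> w = q) \<or> (journey False H w q vs' ts' \<and> t \<le> hd ts')"
      using journey_step[OF J] by auto
    have "w \<in> {x,y,p,q}" using ef(1,2)[OF S(5)] V by auto
    moreover have "w \<noteq> x" using ef(3)[OF S(5)] by simp
    moreover have "w \<noteq> y" using S(5) nxy by auto
    moreover have "w \<noteq> q" using S(5) nxq by auto
    ultimately have wp: "w = p" by auto
    have tl: "t = lbl H x p" using ef(4)[OF S(5)] S(6) wp by auto
    have J2: "journey False H p q vs' ts'" and o: "t \<le> hd ts'" using S(8) wp dist by auto
    obtain w2 t2 vs2 ts2 where S2: "vs' = p#vs2" "ts' = t2#ts2" "vs2 \<noteq> []" "hd vs2 = w2"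
      "{p,w2} \<in> tedges H" "t2 \<in> tlab H {p,w2}"
      using journey_step[OF J2] by auto
    have "w2 \<in> {x,y,p,q}" using ef(1,2)[OF S2(5)] V by auto
    moreover have "w2 \<noteq> p" using ef(3)[OF S2(5)] by simp
    moreover have "w2 \<noteq> x" by (metis S(7) S2(1,3,4) hd_in_set list.set_intros(2))
    moreover have "w2 \<noteq> y" using S2(5) nyp by (auto simp: insert_commute)
    ultimately have wq: "w2 = q" by auto
    have "t2 = lbl H p q" using ef(4)[OF S2(5)] S2(6) wq by auto
    then show ?thesis using S2 wq o tl by auto
  qed
  have B: "lbl H p q \<le> lbl H x p"
  proof -
    from hqx obtain vs ts where J: "journey False H q x vs ts" unfolding has_journey_def by blast
    obtain w t vs' ts' where S: "vs = q#vs'" "ts = t#ts'" "vs' \<noteq> []" "hd vs' = w"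
      "{q,w} \<in> tedges H" "t \<in> tlab H {q,w}" "q \<notin> set vs'"
      "(ts' = [] \<and> w = x) \<or> (journey False H w x vs' ts' \<and> t \<le> hd ts')"
      using journey_step[OF J] by auto
    have "w \<in> {x,y,p,q}" using ef(1,2)[OF S(5)] V by auto
    moreover have "w \<noteq> q" using ef(3)[OF S(5)] by simp
    moreover have "w \<noteq> x" using S(5) nxq by (auto simp: insert_commute)
    ultimately have "w = y \<or> w = p" by auto
    then show ?thesis
    proof
      assume wy: "w = y"
      have J2: "journey False H y x vs' ts'" using S(8) wy dist by auto
      obtain w2 t2 vs2 ts2 where S2: "vs' = y#vs2" "vs2 \<noteq> []" "hd vs2 = w2"
        "{y,w2} \<in> tedges H"
        using journey_step[OF J2] by auto
      have "w2 \<in> {x,y,p,q}" using ef(1,2)[OF S2(4)] V by auto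
      moreover have "w2 \<noteq> y" using ef(3)[OF S2(4)] by simp
      moreover have "w2 \<noteq> q" using S(7) S2(1,2,3) by auto
      moreover have "w2 \<noteq> p" using S2(4) nyp by auto
      moreover have "w2 \<noteq> x" using S2(4) nxy by (auto simp: insert_commute)
      ultimately show ?thesis by auto
    next
      assume wp: "w = p"
      have tl: "t = lbl H p q" using ef(4)[OF S(5)] S(6) wp by (auto simp: lbl_sym)
      have J2: "journey False H p x vs' ts'" and o: "t \<le> hd ts'" using S(8) wp dist by auto
      obtain w2 t2 vs2 ts2 where S2: "vs' = p#vs2" "ts' = t2#ts2" "vs2 \<noteq> []" "hd vs2 = w2"
        "{p,w2} \<in> tedges H" "t2 \<in> tlab H {p,w2}"
        using journey_step[OF J2] by auto
      have "w2 \<in> {x,y,p,q}" using ef(1,2)[OF S2(5)] V by auto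
      moreover have "w2 \<noteq> p" using ef(3)[OF S2(5)] by simp
      moreover have "w2 \<noteq> q" by (metis S(7) S2(1,3,4) hd_in_set list.set_intros(2))
      moreover have "w2 \<noteq> y" using S2(5) nyp by (auto simp: insert_commute)
      ultimately have wx: "w2 = x" by auto
      have "t2 = lbl H x p" using ef(4)[OF S2(5)] S2(6) wx by (auto simp: lbl_sym)
      then show ?thesis using S2 wx o tl by auto
    qed
  qed
  show ?thesis using A B by auto
qed

lemma core2:
  assumes tg: "temporal_graph H" and sm: "simple_tg H"
    and V: "tverts H = {x,y,p,q}" and dist: "distinct [x,y,p,q]"
    and nxy: "{x,y} \<notin> tedges H" and exp: "{x,p} \<in> tedges H" and eyq: "{y,q} \<in> tedges H"
    and nxq: "{x,q} \<notin> tedges H" and nyp: "{y,p} \<notin> tedges H"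
    and hxq: "has_journey False H x q" and hqx: "has_journey False H q x"
    and hyp: "has_journey False H y p" and hpy: "has_journey False H p y"
    and nhxy: "\<not> has_journey False H x y"
  shows False
proof -
  note ef = edge_facts[OF tg sm]
  have h1: "{p,q} \<in> tedges H \<and> lbl H x p = lbl H p q"
    by (rule half[OF tg sm V dist nxy exp nxq nyp hxq hqx])
  have V': "tverts H = {y,x,q,p}" using V by auto
  have h2: "{q,p} \<in> tedges H \<and> lbl H y q = lbl H q p"
    by (rule half[OF tg sm V' _ _ eyq nyp nxq hyp hpy]) (use dist nxy in \<open>auto simp: insert_commute\<close>)
  have eqy: "{q,y} \<in> tedges H" using eyq by (simp add: insert_commute)
  have j3: "journey False H q y [q,y] [lbl H q y]"
    using journey_one[OF eqy, of "lbl H q y"] ef(3,4)[OF eqy] by auto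
  have j2: "journey False H p y (p#[q,y]) (lbl H p q # [lbl H q y])"
    by (rule journey_cons[OF j3]) (use h1 h2 ef(4)[of p q] dist in \<open>auto simp: lbl_sym\<close>)
  have j1: "journey False H x y (x#[p,q,y]) (lbl H x p # [lbl H p q, lbl H q y])"
    by (rule journey_cons[OF j2]) (use exp h1 h2 ef(4)[OF exp] dist in \<open>auto simp: lbl_sym\<close>)
  then show False using nhxy unfolding has_journey_def by blast
qed


lemma nbr:
  assumes tg: "temporal_graph H" and sm: "simple_tg H"
    and V: "tverts H = {x,y,p,q}" and nxy: "{x,y} \<notin> tedges H" and h: "has_journey False H x p"
  shows "\<exists>w. {x,w} \<in> tedges H \<and> (w = p \<or> w = q)"
proof -
  note ef = edge_facts[OF tg sm]
  from h obtain vs ts where J: "journey False H x p vs ts" unfolding has_journey_def by blast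
  obtain w where S: "{x,w} \<in> tedges H" using journey_step[OF J] by auto
  have "w \<in> {x,y,p,q}" using ef(1,2)[OF S] V by auto
  moreover have "w \<noteq> x" using ef(3)[OF S] by simp
  moreover have "w \<noteq> y" using S nxy by auto
  ultimately show ?thesis using S by auto
qed

lemma core:
  assumes tg: "temporal_graph H" and sm: "simple_tg H"
    and V: "tverts H = {x,y,p,q}" and dist: "distinct [x,y,p,q]"
    and nhxy: "\<not> has_journey False H x y" and nhyx: "\<not> has_journey False H y x"
    and hxp: "has_journey False H x p" and hxq: "has_journey False H x q"
    and hpx: "has_journey False H p x" and hqx: "has_journey False H q x"
    and hyp: "has_journey False H y p" and hyq: "has_journey False H y q"
    and hpy: "has_journey False H p y" and hqy: "has_journey False H q y"
  shows False
proof -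
  have nxy: "{x,y} \<notin> tedges H" using edge_hj[OF tg sm] nhxy by blast
  have nyx: "{y,x} \<notin> tedges H" using nxy by (simp add: insert_commute)
  have nc: "\<And>b. {x,b} \<in> tedges H \<Longrightarrow> {y,b} \<in> tedges H \<Longrightarrow> False"
  proof -
    fix b assume "{x,b} \<in> tedges H" "{y,b} \<in> tedges H"
    then have "{b,y} \<in> tedges H" by (simp add: insert_commute)
    then show False using common_hj[OF tg sm \<open>{x,b} \<in> tedges H\<close>] dist nhxy nhyx by auto
  qed
  obtain a where a: "{x,a} \<in> tedges H" "a = p \<or> a = q" using nbr[OF tg sm V nxy hxp] by blast
  have V': "tverts H = {y,x,p,q}" using V by auto
  obtain b where b: "{y,b} \<in> tedges H" "b = p \<or> b = q" using nbr[OF tg sm V' nyx hyp] by blast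
  have ab: "a \<noteq> b" using nc a b by blast
  show False
  proof (cases "a = p")
    case True
    then have bq: "b = q" using ab b by auto
    have "{x,q} \<notin> tedges H" using nc b bq by blast
    moreover have "{y,p} \<notin> tedges H" using nc a True by blast
    ultimately show False
      using core2[OF tg sm V dist nxy] a b True bq hxq hqx hyp hpy nhxy by blast
  next
    case False
    then have aq: "a = q" and bp: "b = p" using ab a b by auto
    have V2: "tverts H = {x,y,q,p}" using V by auto
    have d2: "distinct [x,y,q,p]" using dist by auto
    have "{x,p} \<notin> tedges H" using nc b bp by blast
    moreover have "{y,q} \<notin> tedges H" using nc a aq by blast
    ultimately show False
      using core2[OF tg sm V2 d2 nxy] a b aq bp hxp hpx hyq hqy nhxy by blast
  qed
qed


definition G0 :: "nat tgraph" where
  "G0 = \<lparr>tverts = {0,1,2,3}, tedges = {{0,1},{1,2},{2,3}},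
        tlab = (\<lambda>e. if e = {0,1} then {2} else if e = {1,2} then {1,3} else {2})\<rparr>"

lemma G0_simps: "tverts G0 = {0,1,2,3}" "tedges G0 = {{0,1},{1,2},{2,3}}"
  "tlab G0 {0,1} = {2}" "tlab G0 {1,0} = {2}" "tlab G0 {1,2} = {1,3}" "tlab G0 {2,1} = {1,3}"
  "tlab G0 {2,3} = {2}" "tlab G0 {3,2} = {2}"
  by (auto simp: G0_def doubleton_eq_iff)

lemma G0_pos:
  "has_journey True G0 0 1" "has_journey True G0 0 2" "has_journey True G0 1 0" "has_journey True G0 2 0"
  "has_journey True G0 3 1" "has_journey True G0 3 2" "has_journey True G0 1 3" "has_journey True G0 2 3"
  unfolding has_journey_def
  apply (rule exI[of _ "[0,1]"], rule exI[of _ "[2]"], auto simp add: journey_def G0_def doubleton_eq_iff)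
  apply (rule exI[of _ "[0,1,2]"], rule exI[of _ "[2,3]"], auto simp add: journey_def G0_def doubleton_eq_iff less_Suc_eq numeral_2_eq_2)
  apply (rule exI[of _ "[1,0]"], rule exI[of _ "[2]"], auto simp add: journey_def G0_def doubleton_eq_iff)
  apply (rule exI[of _ "[2,1,0]"], rule exI[of _ "[1,2]"], auto simp add: journey_def G0_def doubleton_eq_iff less_Suc_eq numeral_2_eq_2)
  apply (rule exI[of _ "[3,2,1]"], rule exI[of _ "[2,3]"], auto simp add: journey_def G0_def doubleton_eq_iff less_Suc_eq numeral_2_eq_2)
  apply (rule exI[of _ "[3,2]"], rule exI[of _ "[2]"], auto simp add: journey_def G0_def doubleton_eq_iff)
  apply (rule exI[of _ "[1,2,3]"], rule exI[of _ "[1,2]"], auto simp add: journey_def G0_def doubleton_eq_iff less_Suc_eq numeral_2_eq_2)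
  apply (rule exI[of _ "[2,3]"], rule exI[of _ "[2]"], auto simp add: journey_def G0_def doubleton_eq_iff)
  done


lemma G0_neg03: "\<not> has_journey True G0 0 3"
proof
  assume "has_journey True G0 0 3"
  then obtain vs ts where J: "journey True G0 0 3 vs ts" unfolding has_journey_def by blast
  obtain w t vs' ts' where S: "vs = 0#vs'" "ts = t#ts'" "vs' \<noteq> []" "hd vs' = w"
      "{0,w} \<in> tedges G0" "t \<in> tlab G0 {0,w}" "0 \<notin> set vs'"
      "(ts' = [] \<and> w = 3) \<or> (journey True G0 w 3 vs' ts' \<and> t < hd ts')"
    using journey_step[OF J] by auto
  have w: "w = 1" using S(5) by (auto simp: G0_def doubleton_eq_iff)
  have t: "t = 2" using S(6) w by (auto simp: G0_def doubleton_eq_iff)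
  have J2: "journey True G0 1 3 vs' ts'" and o: "2 < hd ts'" using S(8) w t by auto
  obtain w2 t2 vs2 ts2 where S2: "vs' = 1#vs2" "ts' = t2#ts2" "vs2 \<noteq> []" "hd vs2 = w2"
      "{1,w2} \<in> tedges G0" "t2 \<in> tlab G0 {1,w2}" "1 \<notin> set vs2"
      "(ts2 = [] \<and> w2 = 3) \<or> (journey True G0 w2 3 vs2 ts2 \<and> t2 < hd ts2)"
    using journey_step[OF J2] by auto
  have "w2 \<noteq> 0" by (metis S(7) S2(1,3,4) hd_in_set list.set_intros(2))
  then have w2: "w2 = 2" using S2(5) by (auto simp: G0_def doubleton_eq_iff)
  have t2: "t2 = 3" using S2(6) w2 o S2(2) by (auto simp: G0_def doubleton_eq_iff)
  have J3: "journey True G0 2 3 vs2 ts2" and o2: "3 < hd ts2" using S2(8) w2 t2 by auto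
  obtain w3 t3 vs3 ts3 where S3: "vs2 = 2#vs3" "ts2 = t3#ts3" "vs3 \<noteq> []" "hd vs3 = w3"
      "{2,w3} \<in> tedges G0" "t3 \<in> tlab G0 {2,w3}"
    using journey_step[OF J3] by auto
  have "w3 \<noteq> 1" using S2(7) S3(1,3,4) hd_in_set[of vs3] by auto
  then have w3: "w3 = 3" using S3(5) by (auto simp: G0_def doubleton_eq_iff)
  have "t3 = 2" using S3(6) w3 by (auto simp: G0_def doubleton_eq_iff)
  then show False using o2 S3(2) by simp
qed

lemma G0_neg30: "\<not> has_journey True G0 3 0"
proof
  assume "has_journey True G0 3 0"
  then obtain vs ts where J: "journey True G0 3 0 vs ts" unfolding has_journey_def by blast
  obtain w t vs' ts' where S: "vs = 3#vs'" "ts = t#ts'" "vs' \<noteq> []" "hd vs' = w"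
      "{3,w} \<in> tedges G0" "t \<in> tlab G0 {3,w}" "3 \<notin> set vs'"
      "(ts' = [] \<and> w = 0) \<or> (journey True G0 w 0 vs' ts' \<and> t < hd ts')"
    using journey_step[OF J] by auto
  have w: "w = 2" using S(5) by (auto simp: G0_def doubleton_eq_iff)
  have t: "t = 2" using S(6) w by (auto simp: G0_def doubleton_eq_iff)
  have J2: "journey True G0 2 0 vs' ts'" and o: "2 < hd ts'" using S(8) w t by auto
  obtain w2 t2 vs2 ts2 where S2: "vs' = 2#vs2" "ts' = t2#ts2" "vs2 \<noteq> []" "hd vs2 = w2"
      "{2,w2} \<in> tedges G0" "t2 \<in> tlab G0 {2,w2}" "2 \<notin> set vs2"
      "(ts2 = [] \<and> w2 = 0) \<or> (journey True G0 w2 0 vs2 ts2 \<and> t2 < hd ts2)"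
    using journey_step[OF J2] by auto
  have "w2 \<noteq> 3" by (metis S(7) S2(1,3,4) hd_in_set list.set_intros(2))
  then have w2: "w2 = 1" using S2(5) by (auto simp: G0_def doubleton_eq_iff)
  have t2: "t2 = 3" using S2(6) w2 o S2(2) by (auto simp: G0_def doubleton_eq_iff)
  have J3: "journey True G0 1 0 vs2 ts2" and o2: "3 < hd ts2" using S2(8) w2 t2 by auto
  obtain w3 t3 vs3 ts3 where S3: "vs2 = 1#vs3" "ts2 = t3#ts3" "vs3 \<noteq> []" "hd vs3 = w3"
      "{1,w3} \<in> tedges G0" "t3 \<in> tlab G0 {1,w3}"
    using journey_step[OF J3] by auto
  have "w3 \<noteq> 2" using S2(7) S3(1,3,4) hd_in_set[of vs3] by auto
  then have w3: "w3 = 0" using S3(5) by (auto simp: G0_def doubleton_eq_iff)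
  have "t3 = 2" using S3(6) w3 by (auto simp: G0_def doubleton_eq_iff)
  then show False using o2 S3(2) by simp
qed


theorem mainTheorem5:
  shows "\<exists>G :: nat tgraph. temporal_graph G \<and> proper_tg G \<and>
           (\<forall>H :: nat tgraph. temporal_graph H \<and> simple_tg H \<longrightarrow>
              \<not> digraph_iso (tverts G) (reach_arcs True G) (tverts H) (reach_arcs False H))"
proof (intro exI[of _ G0] conjI allI impI)
  show "temporal_graph G0" by (auto simp: temporal_graph_def G0_def)
  show "proper_tg G0" by (auto simp: proper_tg_def G0_def doubleton_eq_iff)
next
  fix H :: "nat tgraph"
  assume "temporal_graph H \<and> simple_tg H"
  then have tg: "temporal_graph H" and sm: "simple_tg H" by auto
  show "\<not> digraph_iso (tverts G0) (reach_arcs True G0) (tverts H) (reach_arcs False H)"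
  proof
    assume "digraph_iso (tverts G0) (reach_arcs True G0) (tverts H) (reach_arcs False H)"
    then obtain f where bij0: "bij_betw f (tverts G0) (tverts H)"
      and iso0: "\<forall>u\<in>tverts G0. \<forall>v\<in>tverts G0. (u, v) \<in> reach_arcs True G0 \<longleftrightarrow> (f u, f v) \<in> reach_arcs False H"
      unfolding digraph_iso_def by blast
    have bij: "bij_betw f {0,1,2,3} (tverts H)" using bij0 by (simp only: G0_simps)
    have iso: "\<forall>u\<in>{0,1,2,3}. \<forall>v\<in>{0,1,2,3}. (u, v) \<in> reach_arcs True G0 \<longleftrightarrow> (f u, f v) \<in> reach_arcs False H"
      using iso0 by (simp only: G0_simps)
    have inj: "inj_on f {0,1,2,3}" and img: "f ` {0,1,2,3} = tverts H" using bij by (auto simp: bij_betw_def)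
    have tr: "has_journey True G0 a b \<longleftrightarrow> has_journey False H (f a) (f b)"
      if "a \<in> {0,1,2,3}" "b \<in> {0,1,2,3}" "a \<noteq> b" for a b
    proof -
      have "f a \<noteq> f b" using inj that by (meson inj_on_contraD)
      moreover have "f a \<in> tverts H" "f b \<in> tverts H" using img that by auto
      moreover have "(a, b) \<in> reach_arcs True G0 \<longleftrightarrow> (f a, f b) \<in> reach_arcs False H"
        using iso that(1,2) by blast
      moreover have "a \<in> tverts G0" "b \<in> tverts G0" using that by (simp_all only: G0_simps)
      ultimately show ?thesis using that(3) unfolding reach_arcs_def by blast
    qed
    have V: "tverts H = {f 0, f 3, f 1, f 2}" using img by auto
    have dist: "distinct [f 0, f 3, f 1, f 2]" using inj unfolding inj_on_def by fastforce
    show False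
    proof (rule core[OF tg sm V dist])
      show "\<not> has_journey False H (f 0) (f 3)" using tr[of 0 3] G0_neg03 by simp
      show "\<not> has_journey False H (f 3) (f 0)" using tr[of 3 0] G0_neg30 by simp
      show "has_journey False H (f 0) (f 1)" using tr[of 0 1] G0_pos by simp
      show "has_journey False H (f 0) (f 2)" using tr[of 0 2] G0_pos by simp
      show "has_journey False H (f 1) (f 0)" using tr[of 1 0] G0_pos by simp
      show "has_journey False H (f 2) (f 0)" using tr[of 2 0] G0_pos by simp
      show "has_journey False H (f 3) (f 1)" using tr[of 3 1] G0_pos by simp
      show "has_journey False H (f 3) (f 2)" using tr[of 3 2] G0_pos by simp
      show "has_journey False H (f 1) (f 3)" using tr[of 1 3] G0_pos by simp
      show "has_journey False H (f 2) (f 3)" using tr[of 2 3] G0_pos by simp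
    qed
  qed
qed

end
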